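(* Let $n\ge 2$, let $T=\{1,\dots,n\}$ and let $\mathcal T$ be a topology on $T$. Fix an integer $k\ge 1$. Let $A,R,B,S\subseteq T\setminus\{n\}$ with $A\cap R=\emptyset$, $B\cap S=\emptyset$, where every point of $A$ and of $B$ is old (at stage $k$), and every point of $R$ and of $S$ is new (at stage $k$). Suppose $A\cup R\cup\{n\}$ and $B\cup S\cup\{n\}$ are two distinct new lower $k$-systems of $\mathcal T$. Then $A\cup\{n\}$ and $B\cup\{n\}$ are open in $\mathcal T$.
   Context: For $\alpha\in T$, $\alpha^{*}$ (the covering set of $\alpha$) denotes the smallest open set of $\mathcal T$ containing $\alpha$. For an integer $m\ge 0$, an $m$-system is an open set $P$ of $\mathcal T$ such that $P\setminus\{n\}$ has exactly $m$ points; it is upper if $n\notin P$ and lower if $n\in P$. For fixed $k$, a point $\alpha\neq n$ is called old if $\alpha^{*}$ is an $m$-system for some $m<k$, and new if $\alpha^{*}$ is a $k$-system. A $k$-system is called new if it contains at least one point $p\neq n$ that is not contained in any $m$-system with $m\le k-1$. *)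

theory Defs
  imports "HOL-Analysis.Analysis"
begin

text \<open>Covering set of a: the smallest open set containing a (intersection of all open sets
  containing a; open since the space is finite).\<close>
definition covering :: "nat topology \<Rightarrow> nat \<Rightarrow> nat set" where
  "covering U a = \<Inter>{P. openin U P \<and> a \<in> P}"

definition msystem :: "nat topology \<Rightarrow> nat \<Rightarrow> nat \<Rightarrow> nat set \<Rightarrow> bool" where
  "msystem U n m P \<longleftrightarrow> openin U P \<and> card (P - {n}) = m"

definition upper_msystem :: "nat topology \<Rightarrow> nat \<Rightarrow> nat \<Rightarrow> nat set \<Rightarrow> bool" where
  "upper_msystem U n m P \<longleftrightarrow> msystem U n m P \<and> n \<notin> P"

definition lower_msystem :: "nat topology \<Rightarrow> nat \<Rightarrow> nat \<Rightarrow> nat set \<Rightarrow> bool" where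
  "lower_msystem U n m P \<longleftrightarrow> msystem U n m P \<and> n \<in> P"

definition old_point :: "nat topology \<Rightarrow> nat \<Rightarrow> nat \<Rightarrow> nat \<Rightarrow> bool" where
  "old_point U n k a \<longleftrightarrow> a \<in> topspace U \<and> a \<noteq> n \<and> (\<exists>m<k. msystem U n m (covering U a))"

definition new_point :: "nat topology \<Rightarrow> nat \<Rightarrow> nat \<Rightarrow> nat \<Rightarrow> bool" where
  "new_point U n k a \<longleftrightarrow> a \<in> topspace U \<and> a \<noteq> n \<and> msystem U n k (covering U a)"

definition new_ksystem :: "nat topology \<Rightarrow> nat \<Rightarrow> nat \<Rightarrow> nat set \<Rightarrow> bool" where
  "new_ksystem U n k P \<longleftrightarrow> msystem U n k P \<and>
     (\<exists>p\<in>P. p \<noteq> n \<and> \<not> (\<exists>m Q. m \<le> k - 1 \<and> msystem U n m Q \<and> p \<in> Q))"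

end

theory Submission
  imports Defs
begin

lemma cov_open:
  assumes "finite (topspace U)" "a \<in> topspace U"
  shows "openin U (covering U a) \<and> a \<in> covering U a"
proof -
  have fin: "finite {P. openin U P \<and> a \<in> P}"
    by (rule finite_subset[of _ "Pow (topspace U)"]) (auto dest: openin_subset simp: assms)
  have ne: "{P. openin U P \<and> a \<in> P} \<noteq> {}" using assms(2) by auto
  show ?thesis unfolding covering_def
    using openin_Inter[OF fin ne] by auto
qed

lemma cov_sub: "openin U P \<Longrightarrow> a \<in> P \<Longrightarrow> covering U a \<subseteq> P"
  unfolding covering_def by auto

lemma side:
  assumes fin: "finite (topspace U)"
    and sub: "A \<union> R \<subseteq> topspace U - {n}" "A \<inter> R = {}"
    and old: "\<forall>a\<in>A. old_point U n k a"
    and new: "\<forall>r\<in>R. new_point U n k r"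
    and P: "msystem U n k (A \<union> R \<union> {n})"
    and Q: "openin U Q" "n \<in> Q" "\<forall>r\<in>R. r \<notin> Q" "Q \<subseteq> A \<union> R \<union> {n}"
  shows "openin U (A \<union> {n})"
proof -
  let ?P = "A \<union> R \<union> {n}"
  have Po: "openin U ?P" and Pc: "card (?P - {n}) = k" using P by (auto simp: msystem_def)
  have finP: "finite ?P" using openin_subset[OF Po] fin finite_subset by blast
  have aC: "covering U a \<subseteq> A \<union> {n}" if a: "a \<in> A" for a
  proof
    fix x assume x: "x \<in> covering U a"
    have ao: "a \<in> topspace U" "a \<noteq> n" and m: "\<exists>m<k. msystem U n m (covering U a)"
      using old a unfolding old_point_def by auto
    have co: "openin U (covering U a)" using cov_open[OF fin ao(1)] by auto
    have cP: "covering U a \<subseteq> ?P" using cov_sub[OF Po] a by auto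
    show "x \<in> A \<union> {n}"
    proof (rule ccontr)
      assume "x \<notin> A \<union> {n}"
      hence xR: "x \<in> R" using x cP by auto
      have rn: "new_point U n k x" using new xR by auto
      hence xt: "x \<in> topspace U" and kc: "card (covering U x - {n}) = k"
        unfolding new_point_def msystem_def by auto
      have "covering U x \<subseteq> covering U a" using cov_sub[OF co x] .
      hence "card (covering U x - {n}) \<le> card (covering U a - {n})"
        by (intro card_mono) (use finP cP finite_subset in auto)
      with kc m show False unfolding msystem_def by auto
    qed
  qed
  have eq: "A \<union> {n} = Q \<union> (\<Union>a\<in>A. covering U a)"
  proof
    show "A \<union> {n} \<subseteq> Q \<union> (\<Union>a\<in>A. covering U a)"
      using Q(2) cov_open[OF fin] sub old by (auto simp: old_point_def)
    show "Q \<union> (\<Union>a\<in>A. covering U a) \<subseteq> A \<union> {n}" using aC Q(3,4) by auto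
  qed
  have "openin U (\<Union>a\<in>A. covering U a)"
    using cov_open[OF fin] old by (auto simp: old_point_def intro!: openin_Union)
  thus ?thesis using eq Q(1) by (metis openin_Un)
qed

lemma Rdisj:
  assumes fin: "finite (topspace U)"
    and new: "\<forall>r\<in>R. new_point U n k r"
    and P: "msystem U n k (A \<union> R \<union> {n})"
    and Q: "msystem U n k Q" "n \<in> Q" "A \<union> R \<union> {n} \<noteq> Q"
  shows "\<forall>r\<in>R. r \<notin> Q"
proof
  fix r assume r: "r \<in> R"
  let ?P = "A \<union> R \<union> {n}"
  have Po: "openin U ?P" and Pc: "card (?P - {n}) = k" using P by (auto simp: msystem_def)
  have Qo: "openin U Q" and Qc: "card (Q - {n}) = k" using Q by (auto simp: msystem_def)
  have finQ: "finite Q" using openin_subset[OF Qo] fin finite_subset by blast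
  have finP: "finite ?P" using openin_subset[OF Po] fin finite_subset by blast
  have rt: "r \<in> topspace U" and rn: "r \<noteq> n" and rc: "card (covering U r - {n}) = k"
    using new r unfolding new_point_def msystem_def by auto
  have c1: "covering U r \<subseteq> ?P" using cov_sub[OF Po] r by auto
  have e1: "covering U r - {n} = ?P - {n}"
    by (rule card_subset_eq) (use finP c1 rc Pc in auto)
  show "r \<notin> Q"
  proof
    assume "r \<in> Q"
    hence c2: "covering U r \<subseteq> Q" using cov_sub[OF Qo] by auto
    have e2: "covering U r - {n} = Q - {n}"
      by (rule card_subset_eq) (use finQ c2 rc Qc in auto)
    have "?P = Q" using e1 e2 Q(2) by blast
    with Q(3) show False by simp
  qed
qed

theorem lemma2:
  fixes U :: "nat topology" and n k :: nat and A R B S :: "nat set"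
  assumes "n \<ge> 2"
    and "topspace U = {1..n}"
    and "k \<ge> 1"
    and "A \<subseteq> {1..n} - {n}" "R \<subseteq> {1..n} - {n}"
    and "B \<subseteq> {1..n} - {n}" "S \<subseteq> {1..n} - {n}"
    and "A \<inter> R = {}" "B \<inter> S = {}"
    and "\<forall>a\<in>A. old_point U n k a" "\<forall>b\<in>B. old_point U n k b"
    and "\<forall>r\<in>R. new_point U n k r" "\<forall>s\<in>S. new_point U n k s"
    and "A \<union> R \<union> {n} \<noteq> B \<union> S \<union> {n}"
    and "new_ksystem U n k (A \<union> R \<union> {n})" "lower_msystem U n k (A \<union> R \<union> {n})"
    and "new_ksystem U n k (B \<union> S \<union> {n})" "lower_msystem U n k (B \<union> S \<union> {n})"
  shows "openin U (A \<union> {n}) \<and> openin U (B \<union> {n})"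
proof -
  have fin: "finite (topspace U)" using assms(2) by simp
  let ?P = "A \<union> R \<union> {n}" and ?Q = "B \<union> S \<union> {n}"
  have P: "msystem U n k ?P" and Q: "msystem U n k ?Q"
    using assms(16,18) by (auto simp: lower_msystem_def)
  have Po: "openin U ?P" and Qo: "openin U ?Q" using P Q by (auto simp: msystem_def)
  have d1: "\<forall>r\<in>R. r \<notin> ?Q" by (rule Rdisj[OF fin assms(12) P Q]) (use assms(14) in auto)
  have d2: "\<forall>r\<in>S. r \<notin> ?P" by (rule Rdisj[OF fin assms(13) Q P]) (use assms(14) in auto)
  have "openin U (A \<union> {n})"
    by (rule side[OF fin _ assms(8,10,12) P, of "?P \<inter> ?Q"])
       (use assms(2,4,5) Po Qo d1 openin_Int[OF Po Qo] in auto)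
  moreover have "openin U (B \<union> {n})"
    by (rule side[OF fin _ assms(9,11,13) Q, of "?Q \<inter> ?P"])
       (use assms(2,6,7) Po Qo d2 openin_Int[OF Qo Po] in auto)
  ultimately show ?thesis ..
qed

end
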